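(* Let $(\mathcal{L},[\,,\,])$ be a Lie algebra over $\mathbf{k}$ with basis $X=\{x_j:j\in J\}$ where $J$ is totally ordered, let $k\in\mathbf{k}$ be nonzero, and let $\hat A$, $\hat q$, $\hat x_j$, $R$ be as constructed below. Then every element of $\hat A$ is congruent modulo $R$ to a $\mathbf{k}$-linear combination of model monomials, where the model monomials are: (a) $\hat q\hat x_{j_1}\cdots\hat x_{j_m}$ with $m\ge0$, $j_1\le\cdots\le j_m$; (b) $\hat x_{i_1}\cdots\hat x_{i_t}\hat x_{j_0}\hat q\hat x_{j_1}\cdots\hat x_{j_m}$ with $t,m\ge0$, $i_1\le\cdots\le i_t$, $j_0\le j_1\le\cdots\le j_m$; (c) $\hat x_{j_1}\cdots\hat x_{j_m}$ with $m\ge0$, $j_1\le\cdots\le j_m$ (empty products being $\hat 1$).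
   Context: Construction: $\tilde q\notin X$ a symbol, $V$ the $\mathbf{k}$-vector space with basis $X\cup\{\tilde q\}$, $T(V)$ its tensor algebra, $I$ the two-sided ideal generated by $\tilde q\otimes\tilde q-\tilde q$ and all $\tilde q\otimes a\otimes\tilde q-\tilde q\otimes a$ ($a\in T(V)$), $\hat A=T(V)/I$, $\hat q=\tilde q+I$, $\hat 1=1+I$, $\hat x_j=x_j+I$, and $x\mapsto\hat x$ the linear extension to $\mathcal{L}$. $R$ is the two-sided ideal of $\hat A$ generated by all $\widehat{[x,y]}-\hat x\hat y+\hat y\hat x+\hat x\hat y\hat q-\hat y\hat x\hat q-k\hat x\hat q\hat y+k\hat y\hat q\hat x$, $x,y\in\mathcal{L}$. *)

theory Defs
  imports Main "HOL-Library.Poly_Mapping"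
begin

definition pm_smult :: "'k::field \<Rightarrow> ('a \<Rightarrow>\<^sub>0 'k) \<Rightarrow> ('a \<Rightarrow>\<^sub>0 'k)" where
  "pm_smult c p = Poly_Mapping.map (\<lambda>a. c * a) p"

text \<open>Lie algebra structure on L = finitely supported functions (coordinates w.r.t. the basis
  X = {x_j}, x_j = single j 1), with bracket br.\<close>
definition lie_algebra :: "(('j \<Rightarrow>\<^sub>0 'k::field) \<Rightarrow> ('j \<Rightarrow>\<^sub>0 'k) \<Rightarrow> ('j \<Rightarrow>\<^sub>0 'k)) \<Rightarrow> bool" where
  "lie_algebra br \<longleftrightarrow>
     (\<forall>x y z. br (x + y) z = br x z + br y z) \<and>
     (\<forall>x y z. br x (y + z) = br x y + br x z) \<and>
     (\<forall>c x y. br (pm_smult c x) y = pm_smult c (br x y)) \<and>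
     (\<forall>c x y. br x (pm_smult c y) = pm_smult c (br x y)) \<and>
     (\<forall>x. br x x = 0) \<and>
     (\<forall>x y z. br x (br y z) + br y (br z x) + br z (br x y) = 0)"

text \<open>Tensor algebra T(V), V with basis X \<union> {q~}: letters are 'j option,
  None = q~, Some j = x_j; T(V) = finitely supported coefficient maps on words.\<close>
type_synonym ('j, 'k) tens = "'j option list \<Rightarrow>\<^sub>0 'k"

definition tmul :: "('j, 'k::field) tens \<Rightarrow> ('j, 'k) tens \<Rightarrow> ('j, 'k) tens" where
  "tmul p q = (\<Sum>u\<in>Poly_Mapping.keys p. \<Sum>v\<in>Poly_Mapping.keys q.
      Poly_Mapping.single (u @ v) (Poly_Mapping.lookup p u * Poly_Mapping.lookup q v))"

definition tword :: "'j option list \<Rightarrow> ('j, 'k::field) tens" where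
  "tword w = Poly_Mapping.single w 1"

definition tq :: "('j, 'k::field) tens" where
  "tq = tword [None]"

definition tone :: "('j, 'k::field) tens" where
  "tone = tword []"

definition thatx :: "('j \<Rightarrow>\<^sub>0 'k::field) \<Rightarrow> ('j, 'k) tens" where
  "thatx x = (\<Sum>j\<in>Poly_Mapping.keys x. Poly_Mapping.single [Some j] (Poly_Mapping.lookup x j))"

inductive_set tideal :: "('j, 'k::field) tens set \<Rightarrow> ('j, 'k) tens set"
  for G where
  zero: "0 \<in> tideal G"
| gen: "g \<in> G \<Longrightarrow> tmul (tmul a g) b \<in> tideal G"
| add: "u \<in> tideal G \<Longrightarrow> v \<in> tideal G \<Longrightarrow> u + v \<in> tideal G"

definition I_gens :: "('j, 'k::field) tens set" where
  "I_gens = insert (tmul tq tq - tq) {tmul (tmul tq a) tq - tmul tq a | a. True}"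

definition R_gens :: "(('j \<Rightarrow>\<^sub>0 'k::field) \<Rightarrow> ('j \<Rightarrow>\<^sub>0 'k) \<Rightarrow> ('j \<Rightarrow>\<^sub>0 'k)) \<Rightarrow> 'k
    \<Rightarrow> ('j, 'k) tens set" where
  "R_gens br k = {thatx (br x y) - tmul (thatx x) (thatx y) + tmul (thatx y) (thatx x)
       + tmul (tmul (thatx x) (thatx y)) tq - tmul (tmul (thatx y) (thatx x)) tq
       - pm_smult k (tmul (tmul (thatx x) tq) (thatx y))
       + pm_smult k (tmul (tmul (thatx y) tq) (thatx x)) | x y. True}"

definition model_words :: "'j::linorder option list set" where
  "model_words =
     {None # map Some js | js. sorted js}
   \<union> {map Some is @ [Some j0, None] @ map Some js | is j0 js. sorted is \<and> sorted (j0 # js)}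
   \<union> {map Some js | js. sorted js}"

end

theory Submission
  imports Defs
begin


instantiation list :: (type) monoid_add
begin
definition zero_list :: "'a list" where "zero_list = []"
definition plus_list :: "'a list \<Rightarrow> 'a list \<Rightarrow> 'a list" where "plus_list = (@)"
instance by standard (auto simp: zero_list_def plus_list_def)
end

lemma pm_expand: "p = (\<Sum>u\<in>Poly_Mapping.keys p. Poly_Mapping.single u (Poly_Mapping.lookup p u))"
  by (rule poly_mapping_eqI) (simp add: lookup_sum lookup_single when_def in_keys_iff)

lemma tmul_eq: "tmul p q = p * (q :: ('j,'k::field) tens)"
proof -
  have "p * q = (\<Sum>u\<in>Poly_Mapping.keys p. Poly_Mapping.single u (Poly_Mapping.lookup p u)) *
     (\<Sum>v\<in>Poly_Mapping.keys q. Poly_Mapping.single v (Poly_Mapping.lookup q v))"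
    using pm_expand[of p] pm_expand[of q] by simp
  also have "\<dots> = tmul p q"
    by (simp add: tmul_def sum_distrib_left sum_distrib_right mult_single plus_list_def)
       (rule sum.swap)
  finally show ?thesis by simp
qed

definition sc :: "'k \<Rightarrow> ('j,'k::field) tens" where "sc c = Poly_Mapping.single [] c"

lemma sc_mult_single: "sc c * Poly_Mapping.single w a = Poly_Mapping.single w (c*a)"
  by (simp add: sc_def mult_single plus_list_def)
lemma single_mult_sc: "Poly_Mapping.single w a * sc c = Poly_Mapping.single w (c*a)"
  by (simp add: sc_def mult_single plus_list_def mult.commute)

lemma sc_central: "sc c * p = p * (sc c :: ('j,'k::field) tens)"
proof -
  have "sc c * p = sc c * (\<Sum>u\<in>Poly_Mapping.keys p. Poly_Mapping.single u (Poly_Mapping.lookup p u))"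
    using pm_expand[of p] by simp
  also have "\<dots> = (\<Sum>u\<in>Poly_Mapping.keys p. Poly_Mapping.single u (Poly_Mapping.lookup p u)) * sc c"
    by (simp add: sum_distrib_left sum_distrib_right sc_mult_single single_mult_sc)
  finally show ?thesis by (metis pm_expand)
qed

lemma sc_one: "sc 1 = (1 :: ('j,'k::field) tens)"
  by (simp add: sc_def zero_list_def[symmetric])
lemma sc_mult: "sc a * sc b = (sc (a*b) :: ('j,'k::field) tens)"
  by (simp add: sc_def mult_single plus_list_def)

lemma pm_smult_sc: "pm_smult c p = sc c * p"
  by (simp add: pm_smult_def sc_def mult_map_scale_conv_mult zero_list_def)

lemma keys_sc_mult: "Poly_Mapping.keys (sc c * (p::('j,'k::field) tens)) \<subseteq> Poly_Mapping.keys p"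
  unfolding pm_smult_sc[symmetric] pm_smult_def
  by (auto simp: in_keys_iff map.rep_eq when_def)

lemma tword_mult: "tword u * tword v = (tword (u @ v) :: ('j,'k::field) tens)"
  by (simp add: tword_def mult_single plus_list_def)



fun ninv :: "'a::linorder list \<Rightarrow> nat" where
  "ninv [] = 0"
| "ninv (x#xs) = length (filter (\<lambda>y. y < x) xs) + ninv xs"

lemma inv_swap: "(j::'a::linorder) < i \<Longrightarrow> ninv (a@[i,j]@b) = Suc (ninv (a@[j,i]@b))"
  by (induction a) auto

lemma unsorted_split: "\<not> sorted (xs::'a::linorder list) \<Longrightarrow> \<exists>a i j b. xs = a@[i,j]@b \<and> j < i"
proof (induction xs)
  case Nil then show ?case by simp
next
  case (Cons x ys)
  show ?case
  proof (cases "sorted ys")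
    case False
    with Cons obtain a i j b where "ys = a@[i,j]@b" "j < i" by blast
    then show ?thesis by (metis append_Cons)
  next
    case True
    then obtain y zs where ys: "ys = y#zs" using Cons.prems by (cases ys) auto
    with True Cons.prems have "y < x" by auto
    then show ?thesis using ys by (intro exI[of _ "[]"] exI[of _ x] exI[of _ y] exI[of _ zs]) simp
  qed
qed

lemma sort_induct:
  fixes P :: "'a::linorder list \<Rightarrow> bool"
  assumes srt: "\<And>xs. sorted xs \<Longrightarrow> P xs"
    and swp: "\<And>a i j b. j < i \<Longrightarrow> P (a@[j,i]@b) \<Longrightarrow> P (a@[i,j]@b)"
  shows "P xs"
proof (induction "ninv xs" arbitrary: xs rule: less_induct)
  case less
  show ?case
  proof (cases "sorted xs")
    case True then show ?thesis by (rule srt)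
  next
    case False
    then obtain a i j b where xs: "xs = a@[i,j]@b" "j < i" using unsorted_split by blast
    have "P (a@[j,i]@b)" using less inv_swap[OF xs(2), of a b] xs(1) by simp
    then show ?thesis using swp xs by blast
  qed
qed

lemma J_mult_left: "u \<in> tideal G \<Longrightarrow> c * u \<in> tideal G"
proof (induction rule: tideal.induct)
  case zero then show ?case by (simp add: tideal.zero)
next
  case (gen g a b)
  have "c * tmul (tmul a g) b = tmul (tmul (c*a) g) b" by (simp add: tmul_eq mult.assoc)
  then show ?case using tideal.gen[OF gen] by simp
next
  case (add u v) then show ?case by (simp add: distrib_left tideal.add)
qed

lemma J_mult_right: "u \<in> tideal G \<Longrightarrow> u * c \<in> tideal G"
proof (induction rule: tideal.induct)
  case zero then show ?case by (simp add: tideal.zero)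
next
  case (gen g a b)
  have "tmul (tmul a g) b * c = tmul (tmul a g) (b*c)" by (simp add: tmul_eq mult.assoc)
  then show ?case using tideal.gen[OF gen] by simp
next
  case (add u v) then show ?case by (simp add: distrib_right tideal.add)
qed

lemma J_gen: "g \<in> G \<Longrightarrow> g \<in> tideal G"
  using tideal.gen[of g G 1 1] by (simp add: tmul_eq)

lemma sc_neg1: "sc (-1) = (-1 :: ('j,'k::field) tens)"
proof -
  have "sc (-1) = - (sc 1 :: ('j,'k) tens)" unfolding sc_def by (rule single_uminus)
  then show ?thesis by (simp only: sc_one)
qed

lemma J_neg: "u \<in> tideal G \<Longrightarrow> - u \<in> tideal G"
  using J_mult_left[of u G "sc (-1)"] by (simp add: sc_neg1)

lemma J_add: "u \<in> tideal G \<Longrightarrow> v \<in> tideal G \<Longrightarrow> u + v \<in> tideal G"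
  by (rule tideal.add)

lemma J_diff: "u \<in> tideal G \<Longrightarrow> v \<in> tideal G \<Longrightarrow> u - v \<in> tideal G"
  unfolding diff_conv_add_uminus by (intro J_add J_neg)

lemma J_ctx: "u \<in> tideal G \<Longrightarrow> a * u * b \<in> tideal G"
  by (rule J_mult_right, rule J_mult_left)

definition good :: "('j::linorder,'k::field) tens set \<Rightarrow> ('j,'k) tens \<Rightarrow> bool" where
  "good G a \<longleftrightarrow> (\<exists>p. Poly_Mapping.keys p \<subseteq> model_words \<and> a - p \<in> tideal G)"

lemma good_zero: "good G 0"
  unfolding good_def by (rule exI[of _ 0]) (simp add: tideal.zero)

lemma good_add: "good G a \<Longrightarrow> good G b \<Longrightarrow> good G (a + b)"
  unfolding good_def
proof (elim exE conjE)
  fix p q assume "Poly_Mapping.keys p \<subseteq> model_words" "a - p \<in> tideal G"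
    "Poly_Mapping.keys q \<subseteq> model_words" "b - q \<in> tideal G"
  then show "\<exists>p. Poly_Mapping.keys p \<subseteq> model_words \<and> a + b - p \<in> tideal G"
  proof (intro exI[of _ "p+q"] conjI)
    show "Poly_Mapping.keys (p + q) \<subseteq> model_words"
      using keys_add[of p q] \<open>Poly_Mapping.keys p \<subseteq> model_words\<close> \<open>Poly_Mapping.keys q \<subseteq> model_words\<close> by blast
    have eq: "a + b - (p + q) = (a - p) + (b - q)" by (simp add: algebra_simps)
    show "a + b - (p + q) \<in> tideal G" unfolding eq by (rule J_add) fact+
  qed
qed

lemma good_sc: "good G a \<Longrightarrow> good G (sc c * a)"
  unfolding good_def
proof (elim exE conjE)
  fix p assume "Poly_Mapping.keys p \<subseteq> model_words" "a - p \<in> tideal G"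
  then show "\<exists>p. Poly_Mapping.keys p \<subseteq> model_words \<and> sc c * a - p \<in> tideal G"
  proof (intro exI[of _ "sc c * p"] conjI)
    show "Poly_Mapping.keys (sc c * p) \<subseteq> model_words"
      using keys_sc_mult[of c p] \<open>Poly_Mapping.keys p \<subseteq> model_words\<close> by blast
    have "sc c * a - sc c * p = sc c * (a - p)" by (simp add: algebra_simps)
    then show "sc c * a - sc c * p \<in> tideal G" using J_mult_left[of "a-p" G "sc c"] \<open>a - p \<in> tideal G\<close> by simp
  qed
qed

lemma good_neg: "good G a \<Longrightarrow> good G (- a)"
  using good_sc[of G a "-1"] by (simp add: sc_neg1)

lemma good_diff: "good G a \<Longrightarrow> good G b \<Longrightarrow> good G (a - b)"
  unfolding diff_conv_add_uminus by (rule good_add, assumption, rule good_neg)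

lemma good_sum: "(\<And>x. x \<in> S \<Longrightarrow> good G (f x)) \<Longrightarrow> good G (\<Sum>x\<in>S. f x)"
proof (induction S rule: infinite_finite_induct)
  case (insert x F) then show ?case by (simp add: good_add)
qed (simp_all add: good_zero)

lemma good_cong: "a - b \<in> tideal G \<Longrightarrow> good G b \<Longrightarrow> good G a"
  unfolding good_def
proof (elim exE conjE)
  fix p assume "a - b \<in> tideal G" "Poly_Mapping.keys p \<subseteq> model_words" "b - p \<in> tideal G"
  then show "\<exists>p. Poly_Mapping.keys p \<subseteq> model_words \<and> a - p \<in> tideal G"
  proof (intro exI[of _ p] conjI)
    show "Poly_Mapping.keys p \<subseteq> model_words" by fact
    have eq: "a - p = (a - b) + (b - p)" by simp
    show "a - p \<in> tideal G" unfolding eq by (rule J_add) fact+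
  qed
qed

lemma good_model: "w \<in> model_words \<Longrightarrow> good G (tword w)"
  unfolding good_def by (intro exI[of _ "tword w"]) (auto simp: tword_def tideal.zero)



lemma tw_mult2: "tword u * (tword v * q) = tword (u@v) * (q :: ('j,'k::field) tens)"
  by (simp add: mult.assoc[symmetric] tword_mult)
lemma tw_sc: "tword u * (sc c * q) = sc c * (tword u * (q :: ('j,'k::field) tens))"
  by (metis mult.assoc sc_central)
lemma tw_sc2: "tword u * sc c = sc c * (tword u :: ('j,'k::field) tens)"
  by (rule sc_central[symmetric])

lemma thatx_single: "thatx (Poly_Mapping.single i (1::'k::field)) = (tword [Some i] :: ('j,'k) tens)"
  by (simp add: thatx_def tword_def)

lemma single_sc_tword: "Poly_Mapping.single w c = sc c * (tword w :: ('j,'k::field) tens)"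
  by (simp add: tword_def sc_mult_single)

lemma good_B:
  assumes "\<And>l. good G (tword (u @ Some l # w))"
  shows "good G (tword u * thatx z * tword w)"
proof -
  have "tword u * thatx z * tword w =
     (\<Sum>l\<in>Poly_Mapping.keys z. sc (Poly_Mapping.lookup z l) * tword (u @ Some l # w))"
  proof -
    have "tword u * thatx z * tword w =
     (\<Sum>l\<in>Poly_Mapping.keys z. Poly_Mapping.single (u @ Some l # w) (Poly_Mapping.lookup z l))"
      by (simp add: thatx_def sum_distrib_left sum_distrib_right tword_def mult_single plus_list_def)
    then show ?thesis by (simp only: single_sc_tword)
  qed
  then show ?thesis by (simp add: good_sum good_sc assms)
qed

lemma J_eq: "x \<in> tideal G \<Longrightarrow> x = y \<Longrightarrow> y \<in> tideal G" by simp

lemma I_rel: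
  assumes "I_gens \<subseteq> G"
  shows "tword (u @ None # v @ None # w) - tword (u @ None # v @ w) \<in> tideal G"
proof -
  have "tmul (tmul tq (tword v)) tq - tmul tq (tword v) \<in> G" using assms unfolding I_gens_def by blast
  then have "tword u * (tmul (tmul tq (tword v)) tq - tmul tq (tword v)) * tword w \<in> tideal G"
    by (intro J_ctx J_gen)
  then show ?thesis
    by (rule J_eq) (simp add: tmul_eq tq_def tword_mult right_diff_distrib left_diff_distrib mult.assoc tw_mult2)
qed

lemma good_I:
  assumes "I_gens \<subseteq> G" "good G (tword (u @ None # v @ w))"
  shows "good G (tword (u @ None # v @ None # w))"
  using good_cong[OF I_rel[OF assms(1)] assms(2)] .

abbreviation Bt :: "(('j \<Rightarrow>\<^sub>0 'k::field) \<Rightarrow> ('j \<Rightarrow>\<^sub>0 'k) \<Rightarrow> ('j \<Rightarrow>\<^sub>0 'k)) \<Rightarrow> 'j \<Rightarrow> 'j \<Rightarrow> ('j,'k) tens" where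
  "Bt br i j \<equiv> thatx (br (Poly_Mapping.single i 1) (Poly_Mapping.single j 1))"

lemma R_rel:
  assumes "R_gens br k \<subseteq> G"
  shows "Bt br i j - tword [Some i] * tword [Some j] + tword [Some j] * tword [Some i]
    + tword [Some i] * tword [Some j] * tword [None] - tword [Some j] * tword [Some i] * tword [None]
    - sc k * (tword [Some i] * tword [None] * tword [Some j])
    + sc k * (tword [Some j] * tword [None] * tword [Some i]) \<in> tideal G"
proof -
  have "thatx (br (Poly_Mapping.single i 1) (Poly_Mapping.single j 1)) - tmul (thatx (Poly_Mapping.single i 1)) (thatx (Poly_Mapping.single j 1)) + tmul (thatx (Poly_Mapping.single j 1)) (thatx (Poly_Mapping.single i 1))
       + tmul (tmul (thatx (Poly_Mapping.single i 1)) (thatx (Poly_Mapping.single j 1))) tq - tmul (tmul (thatx (Poly_Mapping.single j 1)) (thatx (Poly_Mapping.single i 1))) tq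
       - pm_smult k (tmul (tmul (thatx (Poly_Mapping.single i 1)) tq) (thatx (Poly_Mapping.single j 1)))
       + pm_smult k (tmul (tmul (thatx (Poly_Mapping.single j 1)) tq) (thatx (Poly_Mapping.single i 1))) \<in> G"
    using assms unfolding R_gens_def by blast
  then show ?thesis
    by (intro J_gen) (simp add: tmul_eq pm_smult_sc thatx_single tq_def)
qed



lemma D1:
  assumes "I_gens \<subseteq> G" "R_gens br k \<subseteq> G"
  shows "sc k * (tword (u@None#v@Some i#Some j#w) - tword (u@None#v@Some j#Some i#w))
     - tword (u@None#v) * Bt br i j * tword w \<in> tideal G"
proof -
  let ?L = "tword (u@None#v)" and ?R = "tword w"
  note g = J_ctx[OF R_rel[OF assms(2), of i j], of ?L ?R]
  note I1 = I_rel[OF assms(1), of u "v@[Some i, Some j]" w]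
  note I2 = I_rel[OF assms(1), of u "v@[Some j, Some i]" w]
  note I3 = J_mult_left[OF I_rel[OF assms(1), of u "v@[Some i]" "Some j#w"], of "sc k"]
  note I4 = J_mult_left[OF I_rel[OF assms(1), of u "v@[Some j]" "Some i#w"], of "sc k"]
  have "- (?L * (Bt br i j - tword [Some i] * tword [Some j] + tword [Some j] * tword [Some i]
    + tword [Some i] * tword [Some j] * tword [None] - tword [Some j] * tword [Some i] * tword [None]
    - sc k * (tword [Some i] * tword [None] * tword [Some j])
    + sc k * (tword [Some j] * tword [None] * tword [Some i])) * ?R
    - (tword (u @ None # (v@[Some i, Some j]) @ None # w) - tword (u @ None # (v@[Some i, Some j]) @ w))
    + (tword (u @ None # (v@[Some j, Some i]) @ None # w) - tword (u @ None # (v@[Some j, Some i]) @ w))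
    + sc k * (tword (u @ None # (v@[Some i]) @ None # Some j # w) - tword (u @ None # (v@[Some i]) @ Some j # w))
    - sc k * (tword (u @ None # (v@[Some j]) @ None # Some i # w) - tword (u @ None # (v@[Some j]) @ Some i # w))) \<in> tideal G"
    by (intro J_neg J_add J_diff g I1 I2 I3 I4)
  then show ?thesis
    by (rule J_eq) (simp add: tword_mult tw_mult2 tw_sc tw_sc2 algebra_simps)
qed

lemma D2:
  assumes "I_gens \<subseteq> G" "R_gens br k \<subseteq> G"
  shows "sc k * (tword (u@Some i#None#Some j#w) - tword (u@Some j#None#Some i#w))
     - tword u * Bt br i j * tword (None#w) \<in> tideal G"
proof -
  let ?L = "tword u" and ?R = "tword (None#w)"
  let ?g = "Bt br i j - tword [Some i] * tword [Some j] + tword [Some j] * tword [Some i]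
    + tword [Some i] * tword [Some j] * tword [None] - tword [Some j] * tword [Some i] * tword [None]
    - sc k * (tword [Some i] * tword [None] * tword [Some j])
    + sc k * (tword [Some j] * tword [None] * tword [Some i])"
  note g = J_ctx[OF R_rel[OF assms(2), of i j], of ?L ?R]
  note I1 = I_rel[OF assms(1), of "u@[Some i, Some j]" "[]" w]
  note I2 = I_rel[OF assms(1), of "u@[Some j, Some i]" "[]" w]
  note I3 = J_mult_left[OF I_rel[OF assms(1), of "u@[Some i]" "[Some j]" w], of "sc k"]
  note I4 = J_mult_left[OF I_rel[OF assms(1), of "u@[Some j]" "[Some i]" w], of "sc k"]
  have "- (?L * ?g * ?R
    - (tword ((u@[Some i, Some j]) @ None # [] @ None # w) - tword ((u@[Some i, Some j]) @ None # [] @ w))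
    + (tword ((u@[Some j, Some i]) @ None # [] @ None # w) - tword ((u@[Some j, Some i]) @ None # [] @ w))
    + sc k * (tword ((u@[Some i]) @ None # [Some j] @ None # w) - tword ((u@[Some i]) @ None # [Some j] @ w))
    - sc k * (tword ((u@[Some j]) @ None # [Some i] @ None # w) - tword ((u@[Some j]) @ None # [Some i] @ w))) \<in> tideal G"
    by (intro J_neg J_add J_diff g I1 I2 I3 I4)
  then show ?thesis
    by (rule J_eq) (simp add: tword_mult tw_mult2 tw_sc tw_sc2 algebra_simps)
qed

lemma D3:
  assumes "R_gens br k \<subseteq> G"
  shows "tword (u@Some i#Some j#w) - tword (u@Some j#Some i#w)
     - (tword (u@Some i#Some j#None#w) - tword (u@Some j#Some i#None#w))
     + sc k * (tword (u@Some i#None#Some j#w) - tword (u@Some j#None#Some i#w))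
     - tword u * Bt br i j * tword w \<in> tideal G"
proof -
  let ?L = "tword u" and ?R = "tword w"
  let ?g = "Bt br i j - tword [Some i] * tword [Some j] + tword [Some j] * tword [Some i]
    + tword [Some i] * tword [Some j] * tword [None] - tword [Some j] * tword [Some i] * tword [None]
    - sc k * (tword [Some i] * tword [None] * tword [Some j])
    + sc k * (tword [Some j] * tword [None] * tword [Some i])"
  note g = J_neg[OF J_ctx[OF R_rel[OF assms(1), of i j], of ?L ?R]]
  show ?thesis
    by (rule J_eq[OF g]) (simp add: tword_mult tw_mult2 tw_sc tw_sc2 algebra_simps)
qed



lemma step_k:
  assumes k: "k \<noteq> 0" and J: "sc k * (a - b) - c \<in> tideal G" and gb: "good G b" and gc: "good G c"
  shows "good G (a :: ('j::linorder,'k::field) tens)"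
proof -
  have "sc (inverse k) * (sc k * (a - b) - c) \<in> tideal G" by (rule J_mult_left[OF J])
  moreover have "sc (inverse k) * (sc k * (a - b) - c) = a - (b + sc (inverse k) * c)"
    using k by (simp add: right_diff_distrib mult.assoc[symmetric] sc_mult sc_one)
  ultimately have "a - (b + sc (inverse k) * c) \<in> tideal G" by simp
  then show ?thesis by (rule good_cong) (intro good_add good_sc gb gc)
qed

lemma step3:
  assumes J: "a - b - c + sc k * d - e \<in> tideal G" and "good G b" "good G c" "good G d" "good G e"
  shows "good G (a :: ('j::linorder,'k::field) tens)"
proof -
  have "a - (b + c - sc k * d + e) \<in> tideal G" by (rule J_eq[OF J]) (simp add: algebra_simps)
  then show ?thesis by (rule good_cong) (intro good_add good_diff good_sc assms(2-5))
qed

definition nl :: "'j option list \<Rightarrow> nat" where "nl w = length (filter (\<lambda>x. x \<noteq> None) w)"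

lemma nl_simps[simp]: "nl [] = 0" "nl (None # w) = nl w" "nl (Some x # w) = Suc (nl w)"
  "nl (u @ w) = nl u + nl w" "nl (map Some xs) = length xs"
  by (auto simp: nl_def filter_map o_def)

lemma no_None: "None \<notin> set w \<Longrightarrow> map Some (map the w) = w"
  by (induction w) auto
lemma no_None_nl: "None \<notin> set w \<Longrightarrow> nl w = length w"
proof (induction w)
  case (Cons a w) then show ?case by (cases a) auto
qed simp

lemma good_eq: "good G (tword w) \<Longrightarrow> w = w' \<Longrightarrow> good G (tword w')" by simp



lemma main:
  fixes G :: "('j::linorder,'k::field) tens set"
  assumes k: "k \<noteq> 0" and IG: "I_gens \<subseteq> G" and RG: "R_gens br k \<subseteq> G"
  shows "good G (tword w)"
proof -
  have "\<forall>w. nl w = n \<longrightarrow> good G (tword w)" for n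
  proof (induction n rule: less_induct)
    case (less n)
    have IH: "nl w' < n \<Longrightarrow> good G (tword w')" for w' using less by blast
    have qw: "length us + length vs = n \<Longrightarrow> good G (tword (map Some us @ None # map Some vs))" for us vs
    proof (induction "length us" arbitrary: us vs rule: less_induct)
      case less
      note IH2 = less.hyps
      show ?case
      proof (cases us rule: rev_exhaust)
        case Nil
        have "length vs = n \<longrightarrow> good G (tword (None # map Some vs))"
        proof (induction vs rule: sort_induct)
          case (1 xs)
          then show ?case by (intro impI good_model) (auto simp: model_words_def)
        next
          case (2 a i j b)
          show ?case
          proof
            assume len: "length (a @ [i, j] @ b) = n"
            have gs: "good G (tword (None # map Some (a @ [j, i] @ b)))" using 2 len by simp
            have gB: "good G (tword ([] @ None # map Some a) * Bt br i j * tword (map Some b))"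
              by (rule good_B, rule IH) (use len in simp)
            have "good G (tword ([]@None#map Some a@Some i#Some j#map Some b))"
              by (rule step_k[OF k D1[OF IG RG] _ gB]) (use gs in simp)
            then show "good G (tword (None # map Some (a @ [i, j] @ b)))" by simp
          qed
        qed
        then show ?thesis using Nil less.prems by simp
      next
        case (snoc "is" j0)
        have "length is = length us - 1 \<longrightarrow> (\<forall>j0 vs. length is + 1 + length vs = n \<longrightarrow>
                good G (tword (map Some is @ Some j0 # None # map Some vs)))"
        proof (induction "is" rule: sort_induct)
          case (1 "is")
          show ?case
          proof (intro impI allI)
            fix j0 :: 'j and vs :: "'j list" assume len: "length is + 1 + length vs = n"
            have "l \<noteq> [] \<longrightarrow> length is + length l = n \<longrightarrow>
                good G (tword (map Some is @ Some (hd l) # None # map Some (tl l)))" for l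
            proof (induction l rule: sort_induct)
              case (1 l)
              show ?case
              proof (intro impI)
                assume "l \<noteq> []"
                then obtain j1 js where l: "l = j1 # js" by (cases l) auto
                show "good G (tword (map Some is @ Some (hd l) # None # map Some (tl l)))"
                  using 1 \<open>sorted is\<close> unfolding l
                  by (intro good_model) (fastforce simp: model_words_def)
              qed
            next
              case (2 a i j b)
              show ?case
              proof (intro impI)
                assume len2: "length is + length (a @ [i, j] @ b) = n"
                have gs: "good G (tword (map Some is @ Some (hd (a @ [j, i] @ b)) # None # map Some (tl (a @ [j, i] @ b))))"
                  using 2 len2 by simp
                show "good G (tword (map Some is @ Some (hd (a @ [i, j] @ b)) # None # map Some (tl (a @ [i, j] @ b))))"
                proof (cases a)
                  case Nil
                  have gB: "good G (tword (map Some is) * Bt br i j * tword (None # map Some b))"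
                    by (rule good_B, rule IH) (use len2 Nil in simp)
                  have "good G (tword (map Some is @ Some i # None # Some j # map Some b))"
                    by (rule step_k[OF k D2[OF IG RG] _ gB]) (use gs Nil in simp)
                  then show ?thesis using Nil by simp
                next
                  case (Cons c a')
                  have gB: "good G (tword ((map Some is @ [Some c]) @ None # map Some a') * Bt br i j * tword (map Some b))"
                    by (rule good_B, rule IH) (use len2 Cons in simp)
                  have "good G (tword ((map Some is @ [Some c])@None#map Some a'@Some i#Some j#map Some b))"
                    by (rule step_k[OF k D1[OF IG RG] _ gB]) (use gs Cons in simp)
                  then show ?thesis using Cons by simp
                qed
              qed
            qed
            from this[of "j0 # vs"] len
            show "good G (tword (map Some is @ Some j0 # None # map Some vs))" by simp
          qed
        next
          case (2 a i j b)
          show ?case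
          proof (intro impI allI)
            fix j0 :: 'j and vs :: "'j list"
            assume len1: "length (a @ [i, j] @ b) = length us - 1"
              and len: "length (a @ [i, j] @ b) + 1 + length vs = n"
            have gs: "good G (tword (map Some (a @ [j, i] @ b) @ Some j0 # None # map Some vs))"
              using 2 len1 len by simp
            have gs': "good G (tword (map Some a @ Some j # Some i # map Some b @ Some j0 # None # map Some vs))"
              using gs by simp
            have gB: "good G (tword (map Some a) * Bt br i j * tword (map Some b @ Some j0 # None # map Some vs))"
              by (rule good_B, rule IH) (use len in simp)
            have q1: "good G (tword (map Some a @ Some x # Some y # None # map Some b @ Some j0 # None # map Some vs))" for x y
            proof -
              have "good G (tword (map Some (a @ [x, y]) @ None # map Some (b @ j0 # vs)))"
                by (rule IH2) (use len1 len in auto)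
              then have "good G (tword ((map Some a @ [Some x, Some y]) @ None # (map Some b @ [Some j0]) @ None # map Some vs))"
                by (intro good_I[OF IG]) simp
              then show ?thesis by simp
            qed
            have q2: "good G (tword (map Some a @ Some x # None # Some y # map Some b @ Some j0 # None # map Some vs))" for x y
            proof -
              have "good G (tword (map Some (a @ [x]) @ None # map Some (y # b @ j0 # vs)))"
                by (rule IH2) (use len1 len in auto)
              then have "good G (tword ((map Some a @ [Some x]) @ None # (Some y # map Some b @ [Some j0]) @ None # map Some vs))"
                by (intro good_I[OF IG]) simp
              then show ?thesis by simp
            qed
            have "good G (tword (map Some a @ Some i # Some j # (map Some b @ Some j0 # None # map Some vs)))"
              by (rule step3[OF D3[OF RG] gs'[simplified] good_diff[OF q1 q1] good_diff[OF q2 q2] gB])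
            then show "good G (tword (map Some (a @ [i, j] @ b) @ Some j0 # None # map Some vs))" by simp
          qed
        qed
        then show ?thesis using snoc less.prems by simp
      qed
    qed
    have nq: "length xs = n \<longrightarrow> good G (tword (map Some xs))" for xs
    proof (induction xs rule: sort_induct)
      case (1 xs)
      then show ?case by (intro impI good_model) (auto simp: model_words_def)
    next
      case (2 a i j b)
      show ?case
      proof
        assume len: "length (a @ [i, j] @ b) = n"
        have gs: "good G (tword (map Some a @ Some j # Some i # map Some b))" using 2 len by simp
        have gB: "good G (tword (map Some a) * Bt br i j * tword (map Some b))"
          by (rule good_B, rule IH) (use len in simp)
        have q1: "good G (tword (map Some a @ Some x # Some y # None # map Some b))" for x y
          using qw[of "a @ [x, y]" b] len by simp
        have q2: "good G (tword (map Some a @ Some x # None # Some y # map Some b))" for x y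
          using qw[of "a @ [x]" "y # b"] len by simp
        have "good G (tword (map Some a @ Some i # Some j # map Some b))"
          by (rule step3[OF D3[OF RG] gs good_diff[OF q1 q1] good_diff[OF q2 q2] gB])
        then show "good G (tword (map Some (a @ [i, j] @ b)))" by simp
      qed
    qed
    have "nl w = n \<Longrightarrow> good G (tword w)" for w
    proof (induction "length w" arbitrary: w rule: less_induct)
      case less
      show ?case
      proof (cases "None \<in> set w")
        case False
        then show ?thesis using nq[of "map the w"] no_None[OF False] no_None_nl[OF False] less.prems
          by (metis length_map)
      next
        case True
        then obtain u1 r where w: "w = u1 @ None # r" and u1: "None \<notin> set u1"
          by (metis split_list_first)
        show ?thesis
        proof (cases "None \<in> set r")
          case False
          have "good G (tword (map Some (map the u1) @ None # map Some (map the r)))"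
            by (rule qw) (use less.prems w no_None_nl[OF u1] no_None_nl[OF False] in simp)
          then show ?thesis using w no_None[OF u1] no_None[OF False] by simp
        next
          case True
          then obtain u2 u3 where r: "r = u2 @ None # u3" by (metis split_list)
          have "good G (tword (u1 @ None # u2 @ u3))"
            by (rule less.hyps) (use less.prems w r in simp_all)
          then show ?thesis using good_I[OF IG] w r by blast
        qed
      qed
    qed
    then show ?case by blast
  qed
  then show ?thesis by blast
qed


theorem proposition5p1:
  fixes br :: "('j::linorder \<Rightarrow>\<^sub>0 'k::field) \<Rightarrow> ('j \<Rightarrow>\<^sub>0 'k) \<Rightarrow> ('j \<Rightarrow>\<^sub>0 'k)"
    and k :: 'k
  assumes "lie_algebra br"
    and "k \<noteq> 0"
  shows "\<forall>a :: ('j, 'k) tens. \<exists>p. Poly_Mapping.keys p \<subseteq> model_words \<and>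
           a - p \<in> tideal (I_gens \<union> R_gens br k)"
proof
  fix a :: "('j, 'k) tens"
  have gw: "good (I_gens \<union> R_gens br k) (tword w)" for w :: "'j option list"
    by (rule main[OF assms(2)]) auto
  have "a = (\<Sum>u\<in>Poly_Mapping.keys a. Poly_Mapping.single u (Poly_Mapping.lookup a u))"
    by (rule pm_expand)
  also have "\<dots> = (\<Sum>u\<in>Poly_Mapping.keys a. sc (Poly_Mapping.lookup a u) * tword u)"
    by (simp only: single_sc_tword)
  finally have eq: "a = (\<Sum>u\<in>Poly_Mapping.keys a. sc (Poly_Mapping.lookup a u) * tword u)" .
  have "good (I_gens \<union> R_gens br k) (\<Sum>u\<in>Poly_Mapping.keys a. sc (Poly_Mapping.lookup a u) * tword u)"
    by (intro good_sum good_sc gw)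
  then have "good (I_gens \<union> R_gens br k) a" by (simp only: eq[symmetric])
  then show "\<exists>p. Poly_Mapping.keys p \<subseteq> model_words \<and> a - p \<in> tideal (I_gens \<union> R_gens br k)"
    unfolding good_def .
qed

end
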